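(* Let $p\geq 2$, $q\geq 1$ and $k_1\geq \cdots\geq k_q\geq 1$ be fixed integers, and let $H$ be an $n$-vertex $S^{p+1}_{k_1,\dots,k_q}$-free graph with maximum spectral radius among all such graphs. Then $\rho(H)\geq \frac{p-1}{p}n+O(1)$, where the implied constant depends only on $p,q$ (and not on $n$).
   Context: $S_{k_1,\dots,k_q}$ is the vertex-disjoint union of stars with $k_1,\dots,k_q$ edges. For a graph $G$ and integer $p\ge 2$, the edge blow-up $G^{p+1}$ is obtained by replacing each edge of $G$ by a clique of order $p+1$ containing it, with all new vertices of the different cliques distinct. $\rho(H)$ is the largest eigenvalue of the adjacency matrix of $H$. *)

theory Defs
  imports "Jordan_Normal_Form.Char_Poly"
begin

definition sgraph :: "nat \<Rightarrow> (nat \<Rightarrow> nat \<Rightarrow> bool) \<Rightarrow> bool" where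
  "sgraph n E \<longleftrightarrow> (\<forall>u v. E u v \<longrightarrow> u < n \<and> v < n \<and> u \<noteq> v \<and> E v u)"

definition adj_mat :: "nat \<Rightarrow> (nat \<Rightarrow> nat \<Rightarrow> bool) \<Rightarrow> real mat" where
  "adj_mat n E = mat n n (\<lambda>(i, j). if E i j then 1 else 0)"

definition spec_rad :: "nat \<Rightarrow> (nat \<Rightarrow> nat \<Rightarrow> bool) \<Rightarrow> real" where
  "spec_rad n E = Max {x. eigenvalue (adj_mat n E) x}"

definition contains_subgraph ::
  "nat \<Rightarrow> (nat \<Rightarrow> nat \<Rightarrow> bool) \<Rightarrow> 'a set \<Rightarrow> ('a \<Rightarrow> 'a \<Rightarrow> bool) \<Rightarrow> bool" where
  "contains_subgraph n E VF EF \<longleftrightarrow>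
     (\<exists>\<phi>. inj_on \<phi> VF \<and> \<phi> ` VF \<subseteq> {0..<n} \<and>
          (\<forall>u\<in>VF. \<forall>v\<in>VF. EF u v \<longrightarrow> E (\<phi> u) (\<phi> v)))"

text \<open>Union of vertex-disjoint stars S_{k_1,...,k_q}, ks = [k_1,...,k_q]:
  star j has centre (j,0) and leaves (j,c), 1 \<le> c \<le> k_j.\<close>
definition sf_verts :: "nat list \<Rightarrow> (nat \<times> nat) set" where
  "sf_verts ks = {(j, c). j < length ks \<and> c \<le> ks ! j}"

definition sf_adj :: "nat list \<Rightarrow> (nat \<times> nat) \<Rightarrow> (nat \<times> nat) \<Rightarrow> bool" where
  "sf_adj ks x y \<longleftrightarrow> x \<in> sf_verts ks \<and> y \<in> sf_verts ks \<and> fst x = fst y \<and>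
      ((snd x = 0 \<and> snd y \<noteq> 0) \<or> (snd y = 0 \<and> snd x \<noteq> 0))"

text \<open>Edge blow-up G^{p+1}: every edge e of G gets p-1 new vertices (Inr (e,i), i < p-1)
  forming, together with the two ends of e, a clique of order p+1.\<close>
definition edge_set :: "'a set \<Rightarrow> ('a \<Rightarrow> 'a \<Rightarrow> bool) \<Rightarrow> 'a set set" where
  "edge_set V E = {{u, v} | u v. u \<in> V \<and> v \<in> V \<and> E u v}"

definition blowup_verts :: "'a set \<Rightarrow> ('a \<Rightarrow> 'a \<Rightarrow> bool) \<Rightarrow> nat \<Rightarrow> ('a + ('a set \<times> nat)) set" where
  "blowup_verts V E p = Inl ` V \<union> {Inr (e, i) | e i. e \<in> edge_set V E \<and> i < p - 1}"

fun blowup_adj_aux :: "('a \<Rightarrow> 'a \<Rightarrow> bool) \<Rightarrow> ('a + ('a set \<times> nat)) \<Rightarrow> ('a + ('a set \<times> nat)) \<Rightarrow> bool" where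
  "blowup_adj_aux E (Inl u) (Inl v) = E u v"
| "blowup_adj_aux E (Inl u) (Inr (e, i)) = (u \<in> e)"
| "blowup_adj_aux E (Inr (e, i)) (Inl v) = (v \<in> e)"
| "blowup_adj_aux E (Inr (e, i)) (Inr (f, j)) = (e = f \<and> i \<noteq> j)"

definition blowup_adj :: "'a set \<Rightarrow> ('a \<Rightarrow> 'a \<Rightarrow> bool) \<Rightarrow> nat \<Rightarrow> ('a + ('a set \<times> nat)) \<Rightarrow> ('a + ('a set \<times> nat)) \<Rightarrow> bool" where
  "blowup_adj V E p x y \<longleftrightarrow> x \<in> blowup_verts V E p \<and> y \<in> blowup_verts V E p \<and> blowup_adj_aux E x y"

definition bsf_free :: "nat \<Rightarrow> nat list \<Rightarrow> nat \<Rightarrow> (nat \<Rightarrow> nat \<Rightarrow> bool) \<Rightarrow> bool" where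
  "bsf_free p ks n E \<longleftrightarrow>
     \<not> contains_subgraph n E (blowup_verts (sf_verts ks) (sf_adj ks) p) (blowup_adj (sf_verts ks) (sf_adj ks) p)"

definition spex :: "nat \<Rightarrow> nat list \<Rightarrow> nat \<Rightarrow> (nat \<Rightarrow> nat \<Rightarrow> bool) \<Rightarrow> bool" where
  "spex p ks n E \<longleftrightarrow> sgraph n E \<and> bsf_free p ks n E \<and>
     (\<forall>E'. sgraph n E' \<and> bsf_free p ks n E' \<longrightarrow> spec_rad n E' \<le> spec_rad n E)"

end

theory Submission
  imports Defs
begin

lemma spec_fin: "finite {x. eigenvalue (adj_mat n E) x}"
proof -
  have A: "adj_mat n E \<in> carrier_mat n n" by (simp add: adj_mat_def)
  have "char_poly (adj_mat n E) \<noteq> 0"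
    using degree_monic_char_poly[OF A] by (metis coeff_0 zero_neq_one)
  then have "finite {x. poly (char_poly (adj_mat n E)) x = 0}" by (rule poly_roots_finite)
  then show ?thesis using eigenvalue_root_char_poly[OF A] by simp
qed

lemma spec_ge: "eigenvalue (adj_mat n E) x \<Longrightarrow> x \<le> spec_rad n E"
  unfolding spec_rad_def using spec_fin by (intro Max_ge) auto

definition T :: "nat \<Rightarrow> nat \<Rightarrow> nat \<Rightarrow> nat \<Rightarrow> bool" where
  "T p m i j \<longleftrightarrow> i < p*m \<and> j < p*m \<and> i mod p \<noteq> j mod p"

lemma T_sgraph: "p*m \<le> n \<Longrightarrow> sgraph n (T p m)"
  unfolding sgraph_def T_def by auto

lemma card_res: assumes "p > 0" shows "card {j. j < p*m \<and> j mod p = r} = (if r < p then m else 0)"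
proof (cases "r < p")
  case True
  have "{j. j < p*m \<and> j mod p = r} = (\<lambda>k. k*p + r) ` {..<m}"
  proof -
    have "j \<in> (\<lambda>k. k*p + r) ` {..<m}" if j: "j < p*m" "j mod p = r" for j
    proof -
      have "j = (j div p)*p + r" using j(2) by (metis div_mult_mod_eq)
      moreover have "j div p < m" using j(1) by (simp add: less_mult_imp_div_less mult.commute)
      ultimately show ?thesis by blast
    qed
    moreover have "j < p*m \<and> j mod p = r" if jm: "j \<in> (\<lambda>k. k*p + r) ` {..<m}" for j
    proof -
      obtain k where k: "k < m" "j = k*p + r" using jm by blast
      have "k*p + r < k*p + p" using True by simp
      also have "\<dots> \<le> p*m" using k(1) by (metis add.commute mult.commute mult_Suc_right mult_le_mono2 Suc_le_eq)
      finally show ?thesis using k True by simp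
    qed
    ultimately show ?thesis by blast
  qed
  moreover have "inj_on (\<lambda>k. k*p + r) {..<m}" using assms by (auto simp: inj_on_def)
  ultimately show ?thesis using True by (simp add: card_image)
next
  case False
  then show ?thesis using assms by auto
qed

lemma card_res_ne: assumes "p > 0" "r < p"
  shows "card {j. j < p*m \<and> j mod p \<noteq> r} = (p-1)*m"
proof -
  have "{j. j < p*m \<and> j mod p \<noteq> r} = {..<p*m} - {j. j < p*m \<and> j mod p = r}" by auto
  then have "card {j. j < p*m \<and> j mod p \<noteq> r} = p*m - m"
    using card_res[OF assms(1), of m r] assms(2) card_Diff_subset[of "{j. j < p*m \<and> j mod p = r}" "{..<p*m}"] by auto
  then show ?thesis by (simp add: diff_mult_distrib)
qed

lemma T_eig: assumes p: "p > 0" and pm: "p*m \<le> n" and n: "n \<ge> 1"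
  shows "eigenvalue (adj_mat n (T p m)) (real ((p-1)*m))"
proof -
  define v :: "real vec" where "v = vec n (\<lambda>i. if i < max 1 (p*m) then 1 else 0)"
  have A: "adj_mat n (T p m) \<in> carrier_mat n n" by (simp add: adj_mat_def)
  have vc: "v \<in> carrier_vec n" by (simp add: v_def)
  have v0: "v \<noteq> 0\<^sub>v n"
  proof
    assume "v = 0\<^sub>v n"
    then have "v $ 0 = 0" using n by simp
    then show False using n by (simp add: v_def split: if_splits)
  qed
  have ent: "(adj_mat n (T p m) *\<^sub>v v) $ i = real ((p-1)*m) * v $ i" if i: "i < n" for i
  proof -
    have "(adj_mat n (T p m) *\<^sub>v v) $ i = (\<Sum>j\<in>{0..<n}. (if T p m i j then 1 else 0) * v $ j)"
      using i by (simp add: adj_mat_def mult_mat_vec_def scalar_prod_def v_def)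
    also have "\<dots> = (\<Sum>j\<in>{0..<n}. (if T p m i j then 1 else 0))"
      by (rule sum.cong) (auto simp: v_def T_def)
    also have "\<dots> = real (card {j\<in>{0..<n}. T p m i j})"
      by (simp add: sum.If_cases Int_def)
    also have "{j\<in>{0..<n}. T p m i j} = (if i < p*m then {j. j < p*m \<and> j mod p \<noteq> i mod p} else {})"
      using pm by (auto simp: T_def)
    also have "real (card \<dots>) = real ((p-1)*m) * v $ i"
      using card_res_ne[OF p, of "i mod p" m] p i by (auto simp: v_def)
    finally show ?thesis .
  qed
  have "adj_mat n (T p m) *\<^sub>v v = real ((p-1)*m) \<cdot>\<^sub>v v"
    by (rule eq_vecI) (use ent A vc in auto)
  then show ?thesis unfolding eigenvalue_def eigenvector_def using A vc v0 by auto
qed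

lemma T_free: assumes p: "p \<ge> 2" and ks: "ks \<noteq> []" "ks!0 \<ge> 1"
  shows "bsf_free p ks n (T p m)"
  unfolding bsf_free_def
proof
  let ?V = "sf_verts ks" and ?A = "sf_adj ks"
  define a :: "nat \<times> nat" where "a = (0,0)"
  define b :: "nat \<times> nat" where "b = (0,1)"
  define e where "e = {a, b}"
  define K where "K = {Inl a, Inl b} \<union> (\<lambda>i. Inr (e,i)) ` {..<p-1}"
  have aV: "a \<in> ?V" and bV: "b \<in> ?V" using ks by (auto simp: sf_verts_def a_def b_def)
  have ab: "?A a b" "?A b a" using aV bV by (auto simp: sf_adj_def a_def b_def)
  have eE: "e \<in> edge_set ?V ?A" unfolding edge_set_def e_def using aV bV ab by blast
  have KV: "K \<subseteq> blowup_verts ?V ?A p" unfolding K_def blowup_verts_def using aV bV eE by auto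
  have Kadj: "blowup_adj_aux ?A x y" if "x \<in> K" "y \<in> K" "x \<noteq> y" for x y
    using that ab unfolding K_def e_def by auto
  have cardK: "card K = p + 1"
  proof -
    have "a \<noteq> b" by (simp add: a_def b_def)
    have "card ((\<lambda>i. Inr (e,i)) ` {..<p-1} :: ((nat\<times>nat) + ((nat\<times>nat) set \<times> nat)) set) = p - 1"
      by (subst card_image) (auto simp: inj_on_def)
    moreover have "{Inl a, Inl b} \<inter> (\<lambda>i. Inr (e,i)) ` {..<p-1} = {}" by auto
    moreover have "card {Inl a, Inl b :: ((nat\<times>nat) + ((nat\<times>nat) set \<times> nat))} = 2"
      using \<open>a \<noteq> b\<close> by simp
    ultimately show ?thesis unfolding K_def using p by (subst card_Un_disjoint) auto
  qed
  assume "contains_subgraph n (T p m) (blowup_verts ?V ?A p) (blowup_adj ?V ?A p)"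
  then obtain \<phi> where phi: "inj_on \<phi> (blowup_verts ?V ?A p)"
    "\<forall>u\<in>blowup_verts ?V ?A p. \<forall>v\<in>blowup_verts ?V ?A p. blowup_adj ?V ?A p u v \<longrightarrow> T p m (\<phi> u) (\<phi> v)"
    unfolding contains_subgraph_def by blast
  have "inj_on (\<lambda>x. \<phi> x mod p) K"
  proof (rule inj_onI, rule ccontr)
    fix x y assume xy: "x \<in> K" "y \<in> K" "\<phi> x mod p = \<phi> y mod p" "x \<noteq> y"
    have "blowup_adj ?V ?A p x y" using xy KV Kadj unfolding blowup_adj_def by auto
    then have "T p m (\<phi> x) (\<phi> y)" using phi(2) xy KV by blast
    then show False using xy by (simp add: T_def)
  qed
  moreover have "(\<lambda>x. \<phi> x mod p) ` K \<subseteq> {..<p}" using p by auto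
  ultimately have "card K \<le> card {..<p}" by (intro card_inj_on_le) auto
  then show False using cardK by simp
qed

theorem lemma3p1:
  fixes p q :: nat
  assumes "p \<ge> 2" and "q \<ge> 1"
  shows "\<exists>C::real. \<forall>ks n E.
           length ks = q \<and> sorted_wrt (\<ge>) ks \<and> (\<forall>k\<in>set ks. k \<ge> 1) \<and> n \<ge> 1 \<and>
           spex p ks n E \<longrightarrow>
           spec_rad n E \<ge> (real p - 1) / real p * real n - C"
proof (intro exI allI impI)
  fix ks n E
  assume H: "length ks = q \<and> sorted_wrt (\<ge>) ks \<and> (\<forall>k\<in>set ks. k \<ge> 1) \<and> n \<ge> 1 \<and> spex p ks n E"
  define m where "m = n div p"
  have p0: "p > 0" using assms by simp
  have pm: "p*m \<le> n" unfolding m_def by simp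
  have ks: "ks \<noteq> []" "ks!0 \<ge> 1" using H assms(2) by (auto simp: nth_mem)
  have "spec_rad n (T p m) \<le> spec_rad n E"
    using H T_sgraph[OF pm] T_free[OF assms(1) ks] unfolding spex_def by blast
  moreover have "real ((p-1)*m) \<le> spec_rad n (T p m)"
    using spec_ge T_eig[OF p0 pm] H by blast
  moreover have "(real p - 1) / real p * real n - real p \<le> real ((p-1)*m)"
  proof -
    have "n < p * (m+1)" unfolding m_def using p0
      by (metis add.commute dividend_less_div_times mult.commute mult_Suc_right plus_1_eq_Suc)
    then have "real n \<le> real p * (real m + 1)" by (metis of_nat_le_iff of_nat_mult of_nat_Suc less_imp_le Suc_eq_plus1 add.commute)
    then have "real n / real p \<le> real m + 1" using p0 by (simp add: divide_le_eq mult.commute)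
    then have "(real p - 1) * (real n / real p) \<le> (real p - 1) * (real m + 1)"
      using assms(1) by (intro mult_left_mono) auto
    moreover have "(real p - 1) * (real m + 1) \<le> real ((p-1)*m) + real p"
      using assms(1) by (simp add: of_nat_diff algebra_simps)
    ultimately show ?thesis by simp
  qed
  ultimately show "spec_rad n E \<ge> (real p - 1) / real p * real n - real p" by linarith
qed

end
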